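(* Consider the oceanic model with threshold $h$ under the Shapley scheme. Let $\Pi$ be a partition of all players into winning pools such that every atomic player $i$ is in a pool whose other members are non-atomic players of total mass $k_i$ with $0<k_i\le h$ and $a_i+k_i\ge h$, and all remaining non-atomic players are in pools containing no atomic player, each of total mass exactly $l$, where $l\ge h$ (there being at least one such pool). Then $\Pi$ is a Nash equilibrium if and only if for all distinct atomic players $i,j$: \[\frac{h-a_i}{k_i^2}=\frac{1}{l},\qquad \frac{k_i+a_i-h}{k_i}\ge\frac{a_i}{l},\qquad \frac{k_i+a_i-h}{k_i}\ge\frac{(h-a_j)^2-(\max(0,h-a_i-a_j))^2+(\max(0,a_i-h+k_j))^2}{2k_j^2}.\]
   Context: Oceanic model: there is a finite set $N_a=\{1,\dots,n\}$ of atomic players, player $i$ having stake $a_i>0$, and a continuum $N_s$ of non-atomic players of total mass $L\ge 0$ (a measurable set of non-atomic players contributes stake equal to its Lebesgue measure). A threshold $h>0$ is fixed and $a_i<h$ for every atomic player. Each player either opens her own pool or joins one; pools partition all players. For a pool $S$ let $m(S)$ be the non-atomic mass in $S$ plus the atomic stakes in $S$; its reward is $\rho(S)=1$ if $m(S)\ge h$ (winning) and $0$ otherwise. A partition $\Pi$ into winning pools is a Nash equilibrium if no atomic player can strictly increase her payment by moving to another pool of $\Pi$ or opening a new pool alone, and no non-atomic player can strictly increase her reward per unit of stake by moving to another pool of $\Pi$ (a non-atomic player is infinitesimal, so her move does not change the per-unit reward of the pool she joins). Shapley scheme (oceanic): in a pool $S$ with non-atomic mass $k>0$ and atomic members with stakes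 $b_1,\dots,b_t$, let $L_1,\dots,L_t$ be i.i.d. uniform on $[0,k]$ and $P(i)=\{j\ne i: L_j<L_i\}$; atomic member $i$ receives $\Pr\big[\sum_{j\in P(i)}b_j+L_i<h\le\sum_{j\in P(i)}b_j+L_i+b_i\big]$, and the remaining reward is shared equally per unit of stake among the non-atomic members. *)

theory Defs
  imports "HOL-Probability.Probability"
begin

text \<open>A pool is described by its set of atomic members T and the non-atomic mass k in it
  (non-atomic players are identical and infinitesimal, so this determines everything).\<close>

definition pool_mass :: "(nat \<Rightarrow> real) \<Rightarrow> nat set \<Rightarrow> real \<Rightarrow> real" where
  "pool_mass a T k = k + (\<Sum>j\<in>T. a j)"

definition pool_reward :: "real \<Rightarrow> (nat \<Rightarrow> real) \<Rightarrow> nat set \<Rightarrow> real \<Rightarrow> real" where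
  "pool_reward h a T k = (if pool_mass a T k \<ge> h then 1 else 0)"

definition shapley_atomic :: "real \<Rightarrow> (nat \<Rightarrow> real) \<Rightarrow> nat set \<Rightarrow> real \<Rightarrow> nat \<Rightarrow> real" where
  "shapley_atomic h b T k i =
     (let M = PiM T (\<lambda>_. uniform_measure lborel {0..k}) in
      measure M {L \<in> space M.
         (\<Sum>j\<in>{j\<in>T. j \<noteq> i \<and> L j < L i}. b j) + L i < h \<and>
         h \<le> (\<Sum>j\<in>{j\<in>T. j \<noteq> i \<and> L j < L i}. b j) + L i + b i})"

text \<open>For k > 0 this is the Shapley scheme;
  a pool with no non-atomic mass consisting of i alone gives i its whole reward.
  (Pools without non-atomic mass and with several atomic members are not covered by
  the scheme; they never occur in this development, and are assigned 0.)\<close>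

definition atomic_pay :: "real \<Rightarrow> (nat \<Rightarrow> real) \<Rightarrow> nat set \<Rightarrow> real \<Rightarrow> nat \<Rightarrow> real" where
  "atomic_pay h a T k i =
     (if k > 0 then shapley_atomic h a T k i
      else if T = {i} then pool_reward h a T k else 0)"

definition nonatomic_rate :: "real \<Rightarrow> (nat \<Rightarrow> real) \<Rightarrow> nat set \<Rightarrow> real \<Rightarrow> real" where
  "nonatomic_rate h a T k = (pool_reward h a T k - (\<Sum>i\<in>T. atomic_pay h a T k i)) / k"

text \<open>Nash equilibrium: all pools winning; no atomic player strictly
  gains by joining another pool of the partition or opening a pool alone; no non-atomic
  player strictly gains (per unit of stake) by joining another pool (the rate of the
  target pool being unchanged by her infinitesimal move).\<close>

definition is_NE :: "real \<Rightarrow> (nat \<Rightarrow> real) \<Rightarrow> 'q set \<Rightarrow> ('q \<Rightarrow> nat set) \<Rightarrow> ('q \<Rightarrow> real) \<Rightarrow> bool" where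
  "is_NE h a Q mem mass \<longleftrightarrow>
     (\<forall>q\<in>Q. pool_reward h a (mem q) (mass q) = 1) \<and>
     (\<forall>q\<in>Q. \<forall>i\<in>mem q.
        (\<forall>q'\<in>Q. q' \<noteq> q \<longrightarrow>
           \<not> (atomic_pay h a (insert i (mem q')) (mass q') i > atomic_pay h a (mem q) (mass q) i)) \<and>
        \<not> (atomic_pay h a {i} 0 i > atomic_pay h a (mem q) (mass q) i)) \<and>
     (\<forall>q\<in>Q. mass q > 0 \<longrightarrow> (\<forall>q'\<in>Q. q' \<noteq> q \<longrightarrow> mass q' > 0 \<longrightarrow>
        \<not> (nonatomic_rate h a (mem q') (mass q') > nonatomic_rate h a (mem q) (mass q))))"

end

theory Submission
  imports Defs
begin

lemma int_part1:
  fixes c d :: real assumes "c \<le> d"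
  shows "((\<lambda>x. if x \<in> {c..d} then x else 0) has_integral (d\<^sup>2 - c\<^sup>2)/2) UNIV"
  using ident_has_integral[OF assms] by (subst has_integral_restrict_UNIV)

lemma int_part2:
  fixes c k :: real
  shows "((\<lambda>x. if x \<in> {c..k} then k - x else 0) has_integral (max 0 (k - c))\<^sup>2/2) UNIV"
proof (subst has_integral_restrict_UNIV)
  show "((\<lambda>x. k - x) has_integral (max 0 (k - c))\<^sup>2 / 2) {c..k}"
  proof (cases "c \<le> k")
    case True
    have c1: "((\<lambda>x. k) has_integral (k - c) * k) {c..k}"
      using has_integral_const_real[of k c k] True by simp
    have "((\<lambda>x. k - x) has_integral ((k - c) * k - (k\<^sup>2 - c\<^sup>2)/2)) {c..k}"
      by (intro has_integral_diff c1 ident_has_integral True)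
    moreover have "(k - c) * k - (k\<^sup>2 - c\<^sup>2)/2 = (max 0 (k - c))\<^sup>2 / 2"
      using True by (simp add: max_def power2_eq_square field_simps)
    ultimately show ?thesis by simp
  next
    case False
    then have "{c..k} = {}" by auto
    then show ?thesis using False by simp
  qed
qed

lemma g_int:
  fixes k h ai aj :: real
  assumes k: "0 < k" "k \<le> h" and d: "0 < h - aj" "h - aj \<le> k" and ai: "0 < ai" "ai \<le> h"
  shows "((\<lambda>x. (if h-ai-aj \<le> x \<and> x < h-aj \<and> 0 \<le> x \<and> x \<le> k then x else 0)
     + (if h-ai \<le> x \<and> x < h \<and> 0 \<le> x \<and> x \<le> k then k - x else 0))
    has_integral ((h-aj)\<^sup>2 - (max 0 (h-ai-aj))\<^sup>2 + (max 0 (ai-h+k))\<^sup>2)/2) UNIV"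
proof -
  have 1: "((\<lambda>x. if h-ai-aj \<le> x \<and> x < h-aj \<and> 0 \<le> x \<and> x \<le> k then x else 0)
     has_integral ((h-aj)\<^sup>2 - (max 0 (h-ai-aj))\<^sup>2)/2) UNIV"
  proof (rule has_integral_spike_finite[of "{h-aj}", OF _ _ int_part1])
    show "max 0 (h-ai-aj) \<le> h - aj" using d ai by simp
  qed (use d in auto)
  have 2: "((\<lambda>x. if h-ai \<le> x \<and> x < h \<and> 0 \<le> x \<and> x \<le> k then k - x else 0)
     has_integral (max 0 (ai-h+k))\<^sup>2/2) UNIV"
  proof -
    have "((\<lambda>x. if h-ai \<le> x \<and> x < h \<and> 0 \<le> x \<and> x \<le> k then k - x else 0)
     has_integral (max 0 (k - (h-ai)))\<^sup>2/2) UNIV"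
      by (rule has_integral_spike_finite[of "{h}", OF _ _ int_part2]) (use k ai in auto)
    then show ?thesis by (simp add: algebra_simps)
  qed
  show ?thesis using has_integral_add[OF 1 2] by (simp add: add_divide_distrib)
qed

abbreviation U :: "real \<Rightarrow> real measure" where "U k \<equiv> uniform_measure lborel {0..k}"

lemma U_prob: "k > 0 \<Longrightarrow> prob_space (U k)"
  by (intro prob_space_uniform_measure) auto

lemma sets_U[measurable_cong, simp]: "sets (U k) = sets borel"
  by simp

lemma space_U[simp]: "space (U k) = UNIV"
  by simp

lemma emeasure_U: "k > 0 \<Longrightarrow> S \<in> sets borel \<Longrightarrow> emeasure (U k) S = emeasure lborel ({0..k} \<inter> S) / ennreal k"
  by (subst emeasure_uniform_measure) auto

lemma section_U:
  fixes k x :: real and A1 A2 :: bool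
  assumes k: "k > 0" and x: "0 \<le> x" "x \<le> k"
  shows "emeasure (U k) {y. (y < x \<and> A1) \<or> (\<not> y < x \<and> A2)} =
    ennreal (((if A1 then x else 0) + (if A2 then k - x else 0)) / k)"
proof -
  have m: "{y::real. (y < x \<and> A1) \<or> (\<not> y < x \<and> A2)} \<in> sets borel" by measurable
  have e: "emeasure lborel ({0..k} \<inter> {y. (y < x \<and> A1) \<or> (\<not> y < x \<and> A2)}) =
     ennreal ((if A1 then x else 0) + (if A2 then k - x else 0))"
  proof (cases A1; cases A2)
    assume "A1" "A2" then have "{0..k} \<inter> {y. (y < x \<and> A1) \<or> (\<not> y < x \<and> A2)} = {0..k}" by auto
    then show ?thesis using \<open>A1\<close> \<open>A2\<close> k by simp
  next
    assume "A1" "\<not>A2" then have "{0..k} \<inter> {y. (y < x \<and> A1) \<or> (\<not> y < x \<and> A2)} = {0..<x}" using x by auto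
    then show ?thesis using \<open>A1\<close> \<open>\<not>A2\<close> x by simp
  next
    assume "\<not>A1" "A2" then have "{0..k} \<inter> {y. (y < x \<and> A1) \<or> (\<not> y < x \<and> A2)} = {x..k}" using x by auto
    then show ?thesis using \<open>\<not>A1\<close> \<open>A2\<close> x by simp
  next
    assume "\<not>A1" "\<not>A2" then have "{0..k} \<inter> {y. (y < x \<and> A1) \<or> (\<not> y < x \<and> A2)} = {}" by auto
    then show ?thesis using \<open>\<not>A1\<close> \<open>\<not>A2\<close> by simp
  qed
  show ?thesis unfolding emeasure_U[OF k m] e using k x
    by (subst divide_ennreal) auto
qed

lemma PiM_pair_distr:
  assumes k: "k > 0" and ij: "i \<noteq> j"
  shows "distr (PiM {i,j} (\<lambda>_. U k)) (U k \<Otimes>\<^sub>M U k) (\<lambda>L. (L i, L j)) = U k \<Otimes>\<^sub>M U k"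
proof (rule pair_measure_eqI[symmetric])
  interpret P: prob_space "U k" using U_prob[OF k] .
  interpret PS: product_sigma_finite "\<lambda>_. U k"
    unfolding product_sigma_finite_def using P.sigma_finite_measure_axioms by auto
  show "sigma_finite_measure (U k)" by (rule P.sigma_finite_measure_axioms)
  show "sigma_finite_measure (U k)" by (rule P.sigma_finite_measure_axioms)
  show "sets (U k \<Otimes>\<^sub>M U k) = sets (distr (PiM {i,j} (\<lambda>_. U k)) (U k \<Otimes>\<^sub>M U k) (\<lambda>L. (L i, L j)))"
    by simp
  fix A B assume A: "A \<in> sets (U k)" and B: "B \<in> sets (U k)"
  have meas: "(\<lambda>L. (L i, L j)) \<in> measurable (PiM {i,j} (\<lambda>_. U k)) (U k \<Otimes>\<^sub>M U k)"
    by measurable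
  have "(\<lambda>L. (L i, L j)) -` (A \<times> B) \<inter> space (PiM {i,j} (\<lambda>_. U k)) = PiE {i,j} (\<lambda>t. if t = i then A else B)"
    using ij by (auto simp: space_PiM PiE_iff)
  moreover have "emeasure (PiM {i,j} (\<lambda>_. U k)) (PiE {i,j} (\<lambda>t. if t = i then A else B)) = emeasure (U k) A * emeasure (U k) B"
    using A B ij by (subst PS.emeasure_PiM) auto
  ultimately show "emeasure (U k) A * emeasure (U k) B = emeasure (distr (PiM {i,j} (\<lambda>_. U k)) (U k \<Otimes>\<^sub>M U k) (\<lambda>L. (L i, L j))) (A \<times> B)"
    using A B meas by (subst emeasure_distr) auto
qed

lemma pair_event:
  fixes k h ai aj :: real
  assumes k: "0 < k" "k \<le> h" and d: "0 < h - aj" "h - aj \<le> k" and ai: "0 < ai" "ai \<le> h"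
  shows "measure (U k \<Otimes>\<^sub>M U k) {p. (if snd p < fst p then aj else 0) + fst p < h \<and>
      h \<le> (if snd p < fst p then aj else 0) + fst p + ai} =
    ((h-aj)\<^sup>2 - (max 0 (h-ai-aj))\<^sup>2 + (max 0 (ai-h+k))\<^sup>2) / (2 * k\<^sup>2)"
proof -
  interpret P: prob_space "U k" using U_prob[OF k(1)] .
  define E where "E = {p. (if snd p < fst p then aj else 0) + fst p < h \<and>
      h \<le> (if snd p < fst p then aj else 0) + fst p + ai}"
  define g where "g = (\<lambda>x. (if h-ai-aj \<le> x \<and> x < h-aj \<and> 0 \<le> x \<and> x \<le> k then x else 0)
     + (if h-ai \<le> x \<and> x < h \<and> 0 \<le> x \<and> x \<le> k then k - x else 0))"
  define G where "G = ((h-aj)\<^sup>2 - (max 0 (h-ai-aj))\<^sup>2 + (max 0 (ai-h+k))\<^sup>2)/2"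
  have gI: "(g has_integral G) UNIV" unfolding g_def G_def by (rule g_int) (use k d ai in auto)
  have g_nn: "0 \<le> g x" for x unfolding g_def by auto
  have g_meas: "g \<in> borel_measurable borel" unfolding g_def by measurable
  have G_nn: "0 \<le> G" using has_integral_nonneg[OF gI] g_nn by auto
  have Em: "E \<in> sets (U k \<Otimes>\<^sub>M U k)"
  proof -
    have "{p \<in> space (U k \<Otimes>\<^sub>M U k). (if snd p < fst p then aj else 0) + fst p < h \<and>
      h \<le> (if snd p < fst p then aj else 0) + fst p + ai} \<in> sets (U k \<Otimes>\<^sub>M U k)"
      by measurable
    then show ?thesis unfolding E_def by (simp add: space_pair_measure)
  qed
  have sec: "emeasure (U k) (Pair x -` E) * indicator {0..k} x = ennreal (g x / k)" for x
  proof (cases "x \<in> {0..k}")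
    case True
    have "Pair x -` E = {y. (y < x \<and> (h-ai-aj \<le> x \<and> x < h-aj)) \<or> (\<not> y < x \<and> (h-ai \<le> x \<and> x < h))}"
      unfolding E_def by auto
    moreover have "g x = (if h-ai-aj \<le> x \<and> x < h-aj then x else 0) + (if h-ai \<le> x \<and> x < h then k - x else 0)"
      using True unfolding g_def by simp
    ultimately show ?thesis using True section_U[OF k(1), of x "h-ai-aj \<le> x \<and> x < h-aj" "h-ai \<le> x \<and> x < h"]
      by simp
  next
    case False
    then show ?thesis unfolding g_def by auto
  qed
  have sm: "(\<lambda>x. emeasure (U k) (Pair x -` E)) \<in> borel_measurable lborel"
    proof -
    have eq: "measurable lborel borel = measurable (U k) (borel :: ennreal measure)"
      by (rule measurable_cong_sets) simp_all
    show ?thesis unfolding eq by (rule P.measurable_emeasure_Pair[OF Em])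
  qed
  have "emeasure (U k \<Otimes>\<^sub>M U k) E = (\<integral>\<^sup>+x. emeasure (U k) (Pair x -` E) \<partial>U k)"
    by (rule P.emeasure_pair_measure_alt[OF Em])
  also have "\<dots> = (\<integral>\<^sup>+x. emeasure (U k) (Pair x -` E) * indicator {0..k} x \<partial>lborel) / emeasure lborel {0..k}"
    by (rule nn_integral_uniform_measure[OF sm]) simp
  also have "\<dots> = (\<integral>\<^sup>+x. ennreal (g x / k) \<partial>lborel) / ennreal k"
    using k by (simp only: sec emeasure_lborel_Icc less_imp_le diff_0_right)
  also have "(\<integral>\<^sup>+x. ennreal (g x / k) \<partial>lborel) = ennreal (G / k)"
  proof (rule nn_integral_has_integral_lborel)
    show "(\<lambda>x. g x / k) \<in> borel_measurable borel" using g_meas by measurable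
    show "0 \<le> g x / k" for x using g_nn k by simp
    show "((\<lambda>x. g x / k) has_integral G / k) UNIV" using has_integral_divide[OF gI] by simp
  qed
  also have "ennreal (G / k) / ennreal k = ennreal (G / k\<^sup>2)"
    using k G_nn by (subst divide_ennreal) (auto simp: power2_eq_square)
  finally have em: "emeasure (U k \<Otimes>\<^sub>M U k) E = ennreal (G / k\<^sup>2)" .
  then have "measure (U k \<Otimes>\<^sub>M U k) E = G / k\<^sup>2"
    unfolding measure_def em using G_nn k by (intro enn2real_ennreal) simp
  then show ?thesis unfolding E_def G_def by simp
qed

lemma U_measure:
  assumes k: "0 < k" and S: "S \<in> sets borel" and e: "emeasure lborel ({0..k} \<inter> S) = ennreal r" and r: "0 \<le> r"
  shows "measure (U k) S = r / k"
proof -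
  have "emeasure (U k) S = ennreal (r / k)"
    unfolding emeasure_U[OF k S] e using k r by (subst divide_ennreal) auto
  then show ?thesis unfolding measure_def using k r by simp
qed

lemma U_interval1:
  fixes c k d :: real
  assumes k: "0 < k" and c: "0 \<le> c" "c \<le> k" and d: "k \<le> d"
  shows "measure (U k) {x. c \<le> x \<and> x < d} = (k - c) / k"
proof (rule U_measure[OF k])
  show "{x::real. c \<le> x \<and> x < d} \<in> sets borel" by measurable
  show "0 \<le> k - c" using c by simp
  have s: "{0..k} \<inter> {x. c \<le> x \<and> x < d} \<in> sets lborel" by measurable
  have "emeasure lborel {c..<k} \<le> emeasure lborel ({0..k} \<inter> {x. c \<le> x \<and> x < d})"
    using c d s by (intro emeasure_mono) auto
  moreover have "emeasure lborel ({0..k} \<inter> {x. c \<le> x \<and> x < d}) \<le> emeasure lborel {c..k}"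
    using c d by (intro emeasure_mono) auto
  ultimately show "emeasure lborel ({0..k} \<inter> {x. c \<le> x \<and> x < d}) = ennreal (k - c)"
    using c by (auto intro: order.antisym)
qed

lemma U_interval2:
  fixes c k d :: real
  assumes k: "0 < k" and c: "0 \<le> c" "c \<le> d" and d: "d \<le> k"
  shows "measure (U k) {x. c \<le> x \<and> x < d} = (d - c) / k"
proof (rule U_measure[OF k])
  show "{x::real. c \<le> x \<and> x < d} \<in> sets borel" by measurable
  show "0 \<le> d - c" using c by simp
  have "{0..k} \<inter> {x. c \<le> x \<and> x < d} = {c..<d}" using c d by auto
  then show "emeasure lborel ({0..k} \<inter> {x. c \<le> x \<and> x < d}) = ennreal (d - c)"
    using c by simp
qed

lemma shapley_single:
  assumes k: "0 < k"
  shows "shapley_atomic h b {i} k i = measure (U k) {x. h - b i \<le> x \<and> x < h}"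
proof -
  let ?M = "PiM {i} (\<lambda>_. U k)"
  have ps: "\<And>t. t \<in> {i} \<Longrightarrow> prob_space (U k)" using U_prob[OF k] by simp
  have S: "{x. h - b i \<le> x \<and> x < h} \<in> sets (U k)" by measurable
  have "measure (U k) {x. h - b i \<le> x \<and> x < h} =
     measure (distr ?M (U k) (\<lambda>\<omega>. \<omega> i)) {x. h - b i \<le> x \<and> x < h}"
    using distr_PiM_component[of "{i}" "\<lambda>_. U k" i, OF ps] by simp
  also have "\<dots> = measure ?M ((\<lambda>\<omega>. \<omega> i) -` {x. h - b i \<le> x \<and> x < h} \<inter> space ?M)"
    by (rule measure_distr) (use S in auto)
  also have "(\<lambda>\<omega>. \<omega> i) -` {x. h - b i \<le> x \<and> x < h} \<inter> space ?M =
    {L \<in> space ?M. (\<Sum>j\<in>{j\<in>{i}. j \<noteq> i \<and> L j < L i}. b j) + L i < h \<and>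
         h \<le> (\<Sum>j\<in>{j\<in>{i}. j \<noteq> i \<and> L j < L i}. b j) + L i + b i}"
  proof -
    have e: "{j\<in>{i}. j \<noteq> i \<and> L j < L i} = {}" for L :: "nat \<Rightarrow> real" by auto
    show ?thesis by (simp only: e sum.empty) auto
  qed
  finally show ?thesis unfolding shapley_atomic_def Let_def by simp
qed

lemma shapley_pair:
  assumes k: "0 < k" and ij: "i \<noteq> j"
  shows "shapley_atomic h b (insert i {j}) k i = measure (U k \<Otimes>\<^sub>M U k) {p. (if snd p < fst p then b j else 0) + fst p < h \<and>
      h \<le> (if snd p < fst p then b j else 0) + fst p + b i}"
proof -
  let ?M = "PiM {i,j} (\<lambda>_. U k)"
  let ?E = "{p. (if snd p < fst p then b j else 0) + fst p < h \<and>
      h \<le> (if snd p < fst p then b j else 0) + fst p + b i}"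
  have E: "?E \<in> sets (U k \<Otimes>\<^sub>M U k)"
  proof -
    have "{p \<in> space (U k \<Otimes>\<^sub>M U k). (if snd p < fst p then b j else 0) + fst p < h \<and>
      h \<le> (if snd p < fst p then b j else 0) + fst p + b i} \<in> sets (U k \<Otimes>\<^sub>M U k)"
      by measurable
    then show ?thesis by (simp add: space_pair_measure)
  qed
  have meas: "(\<lambda>L. (L i, L j)) \<in> measurable ?M (U k \<Otimes>\<^sub>M U k)"
    by measurable
  have "measure (U k \<Otimes>\<^sub>M U k) ?E = measure (distr ?M (U k \<Otimes>\<^sub>M U k) (\<lambda>L. (L i, L j))) ?E"
    using PiM_pair_distr[OF k ij] by simp
  also have "\<dots> = measure ?M ((\<lambda>L. (L i, L j)) -` ?E \<inter> space ?M)"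
    by (rule measure_distr[OF meas E])
  also have "(\<lambda>L. (L i, L j)) -` ?E \<inter> space ?M =
    {L \<in> space ?M. (\<Sum>j\<in>{j'\<in>{i,j}. j' \<noteq> i \<and> L j' < L i}. b j) + L i < h \<and>
         h \<le> (\<Sum>j\<in>{j'\<in>{i,j}. j' \<noteq> i \<and> L j' < L i}. b j) + L i + b i}"
  proof -
    have "{j'\<in>{i,j}. j' \<noteq> i \<and> L j' < L i} = (if L j < L i then {j} else {})" for L :: "nat \<Rightarrow> real"
      using ij by auto
    then show ?thesis by auto
  qed
  finally show ?thesis unfolding shapley_atomic_def Let_def by simp
qed

theorem lemma3p5:
  fixes h l :: real and n :: nat and a k :: "nat \<Rightarrow> real"
    and Q :: "'q set" and mem :: "'q \<Rightarrow> nat set" and mass :: "'q \<Rightarrow> real"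
    and p :: "nat \<Rightarrow> 'q"
  assumes h_pos: "h > 0"
    and a_pos: "\<And>i. i \<in> {1..n} \<Longrightarrow> a i > 0"
    and a_lt: "\<And>i. i \<in> {1..n} \<Longrightarrow> a i < h"
    and Q_fin: "finite Q"
    and p_in: "\<And>i. i \<in> {1..n} \<Longrightarrow> p i \<in> Q"
    and p_mem: "\<And>i. i \<in> {1..n} \<Longrightarrow> mem (p i) = {i}"
    and p_mass: "\<And>i. i \<in> {1..n} \<Longrightarrow> mass (p i) = k i"
    and k_pos: "\<And>i. i \<in> {1..n} \<Longrightarrow> 0 < k i \<and> k i \<le> h"
    and k_win: "\<And>i. i \<in> {1..n} \<Longrightarrow> a i + k i \<ge> h"
    and rest: "\<And>q. q \<in> Q \<Longrightarrow> q \<notin> p ` {1..n} \<Longrightarrow> mem q = {} \<and> mass q = l"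
    and rest_ex: "\<exists>q\<in>Q. q \<notin> p ` {1..n}"
    and l_ge: "l \<ge> h"
  shows "is_NE h a Q mem mass \<longleftrightarrow>
    (\<forall>i\<in>{1..n}.
        (h - a i) / (k i)\<^sup>2 = 1 / l \<and>
        (k i + a i - h) / k i \<ge> a i / l) \<and>
    (\<forall>i\<in>{1..n}. \<forall>j\<in>{1..n}. i \<noteq> j \<longrightarrow>
        (k i + a i - h) / k i \<ge>
          ((h - a j)\<^sup>2 - (max 0 (h - a i - a j))\<^sup>2 + (max 0 (a i - h + k j))\<^sup>2) / (2 * (k j)\<^sup>2))"
    (is "_ \<longleftrightarrow> ?R1 \<and> ?R2")
proof -
  have l_pos: "l > 0" using h_pos l_ge by simp
  obtain q0 where q0: "q0 \<in> Q" "q0 \<notin> p ` {1..n}" using rest_ex by blast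
  have q0m: "mem q0 = {}" "mass q0 = l" using rest[OF q0] by auto
  have cases_q: "\<And>q. q \<in> Q \<Longrightarrow> (\<exists>i\<in>{1..n}. q = p i) \<or> (q \<notin> p ` {1..n} \<and> mem q = {} \<and> mass q = l)"
    using rest by blast
  have p_inj: "\<And>i j. i \<in> {1..n} \<Longrightarrow> j \<in> {1..n} \<Longrightarrow> p i = p j \<Longrightarrow> i = j"
    using p_mem by (metis singleton_inject)
  have self: "atomic_pay h a {i} (k i) i = (k i + a i - h) / k i" if i: "i \<in> {1..n}" for i
  proof -
    have "atomic_pay h a {i} (k i) i = measure (U (k i)) {x. h - a i \<le> x \<and> x < h}"
      using k_pos[OF i] by (simp add: atomic_pay_def shapley_single)
    also have "\<dots> = (k i - (h - a i)) / k i"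
      using k_pos[OF i] k_win[OF i] a_lt[OF i] by (intro U_interval1) auto
    finally show ?thesis by simp
  qed
  have restpay: "atomic_pay h a (insert i {}) l i = a i / l" if i: "i \<in> {1..n}" for i
  proof -
    have "atomic_pay h a (insert i {}) l i = measure (U l) {x. h - a i \<le> x \<and> x < h}"
      using l_pos by (simp add: atomic_pay_def shapley_single)
    also have "\<dots> = (h - (h - a i)) / l"
      using l_pos l_ge a_lt[OF i] a_pos[OF i] by (intro U_interval2) auto
    finally show ?thesis by simp
  qed
  have other: "atomic_pay h a (insert i {j}) (k j) i =
      ((h - a j)\<^sup>2 - (max 0 (h - a i - a j))\<^sup>2 + (max 0 (a i - h + k j))\<^sup>2) / (2 * (k j)\<^sup>2)"
    if i: "i \<in> {1..n}" and j: "j \<in> {1..n}" and ij: "i \<noteq> j" for i j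
  proof -
    have "atomic_pay h a (insert i {j}) (k j) i = measure (U (k j) \<Otimes>\<^sub>M U (k j)) {p. (if snd p < fst p then a j else 0) + fst p < h \<and>
      h \<le> (if snd p < fst p then a j else 0) + fst p + a i}"
      using k_pos[OF j] ij by (simp add: atomic_pay_def shapley_pair)
    also have "\<dots> = ((h - a j)\<^sup>2 - (max 0 (h - a i - a j))\<^sup>2 + (max 0 (a i - h + k j))\<^sup>2) / (2 * (k j)\<^sup>2)"
      by (rule pair_event) (use k_pos[OF j] k_win[OF j] a_lt[OF j] a_pos[OF j] a_lt[OF i] a_pos[OF i] in auto)
    finally show ?thesis .
  qed
  have alone: "atomic_pay h a {i} 0 i = 0" if i: "i \<in> {1..n}" for i
    using a_lt[OF i] by (simp add: atomic_pay_def pool_reward_def pool_mass_def)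
  have rate: "nonatomic_rate h a {i} (k i) = (h - a i) / (k i)\<^sup>2" if i: "i \<in> {1..n}" for i
  proof -
    have "pool_reward h a {i} (k i) = 1" using k_win[OF i] by (simp add: pool_reward_def pool_mass_def add.commute)
    then have "nonatomic_rate h a {i} (k i) = (1 - (k i + a i - h) / k i) / k i"
      using self[OF i] by (simp add: nonatomic_rate_def)
    also have "\<dots> = (h - a i) / (k i)\<^sup>2" using k_pos[OF i] by (simp add: field_simps power2_eq_square)
    finally show ?thesis .
  qed
  have rate0: "nonatomic_rate h a {} l = 1 / l"
    using l_ge by (simp add: nonatomic_rate_def pool_reward_def pool_mass_def)
  have selfnn: "0 \<le> (k i + a i - h) / k i" if i: "i \<in> {1..n}" for i
    using k_pos[OF i] k_win[OF i] by simp
  have win: "pool_reward h a (mem q) (mass q) = 1" if q: "q \<in> Q" for q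
    using cases_q[OF q]
  proof
    assume "\<exists>i\<in>{1..n}. q = p i"
    then obtain i where i: "i \<in> {1..n}" "q = p i" by blast
    then show ?thesis using p_mem p_mass k_win[OF i(1)] by (simp add: pool_reward_def pool_mass_def add.commute)
  next
    assume "q \<notin> p ` {1..n} \<and> mem q = {} \<and> mass q = l"
    then show ?thesis using l_ge by (simp add: pool_reward_def pool_mass_def)
  qed
  show ?thesis
  proof
    assume NE: "is_NE h a Q mem mass"
    have R1: "(h - a i) / (k i)\<^sup>2 = 1 / l \<and> (k i + a i - h) / k i \<ge> a i / l" if i: "i \<in> {1..n}" for i
    proof -
      have ne: "q0 \<noteq> p i" using q0 i by blast
      have A: "\<not> (nonatomic_rate h a (mem q0) (mass q0) > nonatomic_rate h a (mem (p i)) (mass (p i)))"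
        using NE p_in[OF i] q0(1) ne k_pos[OF i] l_pos unfolding is_NE_def p_mem[OF i] p_mass[OF i] q0m
        by (metis (no_types, lifting) p_mem[OF i] p_mass[OF i] q0m)
      have B: "\<not> (nonatomic_rate h a (mem (p i)) (mass (p i)) > nonatomic_rate h a (mem q0) (mass q0))"
        using NE p_in[OF i] q0(1) ne k_pos[OF i] l_pos unfolding is_NE_def
        by (metis (no_types, lifting) p_mass[OF i] q0m)
      have C: "\<not> (atomic_pay h a (insert i (mem q0)) (mass q0) i > atomic_pay h a (mem (p i)) (mass (p i)) i)"
        using NE p_in[OF i] q0(1) ne unfolding is_NE_def p_mem[OF i]
        by (metis insertI1 p_mem[OF i] ne)
      show ?thesis using A B C
        unfolding p_mem[OF i] p_mass[OF i] q0m rate[OF i] rate0 restpay[OF i] self[OF i] by auto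
    qed
    have R2: "(k i + a i - h) / k i \<ge>
          ((h - a j)\<^sup>2 - (max 0 (h - a i - a j))\<^sup>2 + (max 0 (a i - h + k j))\<^sup>2) / (2 * (k j)\<^sup>2)"
      if i: "i \<in> {1..n}" and j: "j \<in> {1..n}" and ij: "i \<noteq> j" for i j
    proof -
      have ne: "p j \<noteq> p i" using p_inj i j ij by blast
      have C: "\<not> (atomic_pay h a (insert i (mem (p j))) (mass (p j)) i > atomic_pay h a (mem (p i)) (mass (p i)) i)"
        using NE p_in[OF i] p_in[OF j] ne unfolding is_NE_def
        by (metis insertI1 p_mem[OF i])
      show ?thesis using C
        unfolding p_mem[OF i] p_mass[OF i] p_mem[OF j] p_mass[OF j] self[OF i] other[OF i j ij] by auto
    qed
    show "?R1 \<and> ?R2" using R1 R2 by blast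
  next
    assume R: "?R1 \<and> ?R2"
    have rateQ: "nonatomic_rate h a (mem q) (mass q) = 1 / l" if q: "q \<in> Q" for q
      using cases_q[OF q]
    proof
      assume "\<exists>i\<in>{1..n}. q = p i"
      then obtain i where i: "i \<in> {1..n}" "q = p i" by blast
      then show ?thesis using R rate[OF i(1)] p_mem[OF i(1)] p_mass[OF i(1)] by simp
    next
      assume "q \<notin> p ` {1..n} \<and> mem q = {} \<and> mass q = l"
      then show ?thesis using rate0 by simp
    qed
    have atom: "(\<forall>q'\<in>Q. q' \<noteq> q \<longrightarrow>
           \<not> (atomic_pay h a (insert i (mem q')) (mass q') i > atomic_pay h a (mem q) (mass q) i)) \<and>
        \<not> (atomic_pay h a {i} 0 i > atomic_pay h a (mem q) (mass q) i)"
      if q: "q \<in> Q" and iq: "i \<in> mem q" for q i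
    proof -
      obtain i' where i': "i' \<in> {1..n}" "q = p i'" using cases_q[OF q] iq by blast
      have ii: "i' = i" using iq i' p_mem by auto
      have i: "i \<in> {1..n}" using i' ii by simp
      have qq: "q = p i" using i' ii by simp
      have X: "\<not> (atomic_pay h a (insert i (mem q')) (mass q') i > atomic_pay h a (mem q) (mass q) i)"
        if q': "q' \<in> Q" "q' \<noteq> q" for q'
        using cases_q[OF q'(1)]
      proof
        assume "\<exists>j\<in>{1..n}. q' = p j"
        then obtain j where j: "j \<in> {1..n}" "q' = p j" by blast
        have ij: "i \<noteq> j" using j q' qq by blast
        have "((h - a j)\<^sup>2 - (max 0 (h - a i - a j))\<^sup>2 + (max 0 (a i - h + k j))\<^sup>2) / (2 * (k j)\<^sup>2) \<le> (k i + a i - h) / k i"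
          using R i j(1) ij by blast
        then show ?thesis
          unfolding qq j(2) p_mem[OF i] p_mass[OF i] p_mem[OF j(1)] p_mass[OF j(1)] self[OF i] other[OF i j(1) ij]
          by auto
      next
        assume "q' \<notin> p ` {1..n} \<and> mem q' = {} \<and> mass q' = l"
        moreover have "a i / l \<le> (k i + a i - h) / k i" using R i by blast
        ultimately show ?thesis
          unfolding qq p_mem[OF i] p_mass[OF i] self[OF i] by (simp add: restpay[OF i])
      qed
      show ?thesis using X alone[OF i] selfnn[OF i]
        unfolding qq p_mem[OF i] p_mass[OF i] self[OF i] by auto
    qed
    show "is_NE h a Q mem mass"
      unfolding is_NE_def using win atom rateQ by auto
  qed
qed

end
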